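(* Let $\lambda\in Y^{++}$ and let $(\mu_n)_{n\in\mathbb N}$ be a sequence in $W^v\lambda$ with $l(w_{\mu_n})\to+\infty$. Then $\mu_n-\lambda\in Q^\vee$ for all $n$ and $h(\mu_n-\lambda)\to-\infty$.
   Context: $I$ finite, $A$ a generalized Cartan matrix, $Y$ a free $\mathbb Z$-module of finite rank with free family $(\alpha_i^\vee)_{i\in I}$ and $\alpha_i\in\mathrm{Hom}(Y,\mathbb Z)$ with $\alpha_j(\alpha_i^\vee)=a_{i,j}$; $\mathbb A=Y\otimes\mathbb R$; $r_i(v)=v-\alpha_i(v)\alpha_i^\vee$; $W^v=\langle r_i\rangle$ with length $l$; $Q^\vee=\bigoplus\mathbb Z\alpha_i^\vee$; $C^v_f=\{\alpha_i>0\ \forall i\}$, $\mathcal T=\bigcup_w w\overline{C^v_f}$, $Y^+=Y\cap\mathcal T$, $Y^{++}=Y\cap\overline{C^v_f}$. For $x=\sum_i x_i\alpha_i^\vee\in Q^\vee$, $h(x)=\sum_i x_i$. For $\mu\in Y^+$, $w_\mu$ denotes the element $w\in W^v$ of minimal length such that $w^{-1}\mu\in\overline{C^v_f}$. *)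

theory Defs
  imports "HOL-Analysis.Finite_Cartesian_Product"
begin

text \<open>The lattice Y is modelled as int^'d ('d a finite type, the rank).
  Roots alpha_i in Hom(Y,Z) are represented by vectors rt i via the
  standard pairing.\<close>

definition pair :: "int ^ 'd \<Rightarrow> int ^ 'd \<Rightarrow> int" where
  "pair a v = (\<Sum>k\<in>UNIV. a $ k * v $ k)"

definition gen_cartan_matrix :: "('i \<Rightarrow> 'i \<Rightarrow> int) \<Rightarrow> bool" where
  "gen_cartan_matrix A \<longleftrightarrow>
     (\<forall>i. A i i = 2) \<and> (\<forall>i j. i \<noteq> j \<longrightarrow> A i j \<le> 0) \<and>
     (\<forall>i j. A i j = 0 \<longleftrightarrow> A j i = 0)"

definition free_family :: "('i::finite \<Rightarrow> int ^ 'd) \<Rightarrow> bool" where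
  "free_family cor \<longleftrightarrow> (\<forall>c. (\<Sum>i\<in>UNIV. c i *s cor i) = 0 \<longrightarrow> (\<forall>i. c i = 0))"

definition refl :: "('i \<Rightarrow> int ^ 'd) \<Rightarrow> ('i \<Rightarrow> int ^ 'd) \<Rightarrow> 'i \<Rightarrow> int ^ 'd \<Rightarrow> int ^ 'd" where
  "refl cor rt i v = v - pair (rt i) v *s cor i"

definition word_act :: "('i \<Rightarrow> int ^ 'd) \<Rightarrow> ('i \<Rightarrow> int ^ 'd) \<Rightarrow> 'i list \<Rightarrow> int ^ 'd \<Rightarrow> int ^ 'd" where
  "word_act cor rt ws = foldr (\<lambda>i f. refl cor rt i \<circ> f) ws id"

definition weyl :: "('i \<Rightarrow> int ^ 'd) \<Rightarrow> ('i \<Rightarrow> int ^ 'd) \<Rightarrow> (int ^ 'd \<Rightarrow> int ^ 'd) set" where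
  "weyl cor rt = {word_act cor rt ws | ws. True}"

definition wlen :: "('i \<Rightarrow> int ^ 'd) \<Rightarrow> ('i \<Rightarrow> int ^ 'd) \<Rightarrow> (int ^ 'd \<Rightarrow> int ^ 'd) \<Rightarrow> nat" where
  "wlen cor rt w = (LEAST n. \<exists>ws. length ws = n \<and> word_act cor rt ws = w)"

definition dominant :: "('i \<Rightarrow> int ^ 'd) \<Rightarrow> int ^ 'd \<Rightarrow> bool" where
  "dominant rt v \<longleftrightarrow> (\<forall>i. pair (rt i) v \<ge> 0)"

definition len_wmu :: "('i \<Rightarrow> int ^ 'd) \<Rightarrow> ('i \<Rightarrow> int ^ 'd) \<Rightarrow> int ^ 'd \<Rightarrow> nat" where
  "len_wmu cor rt \<mu> = (LEAST n. \<exists>w\<in>weyl cor rt. wlen cor rt w = n \<and>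
       (\<exists>v. dominant rt v \<and> w v = \<mu>))"

definition in_Qcor :: "('i::finite \<Rightarrow> int ^ 'd) \<Rightarrow> int ^ 'd \<Rightarrow> bool" where
  "in_Qcor cor x \<longleftrightarrow> (\<exists>c. x = (\<Sum>i\<in>UNIV. c i *s cor i))"

definition height :: "('i::finite \<Rightarrow> int ^ 'd) \<Rightarrow> int ^ 'd \<Rightarrow> int" where
  "height cor x = (THE s. \<exists>c. x = (\<Sum>i\<in>UNIV. c i *s cor i) \<and> s = (\<Sum>i\<in>UNIV. c i))"

end

theory Submission
  imports Defs
begin

lemma pair_add: "pair g (x + y) = pair g x + pair g y"
  by (simp add: pair_def sum.distrib algebra_simps)
lemma pair_diff: "pair g (x - y) = pair g x - pair g y"
  by (simp add: pair_def sum_subtractf algebra_simps)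
lemma pair_smult: "pair g (c *s x) = c * pair g x"
  by (simp add: pair_def sum_distrib_left algebra_simps)
lemma pair_axis: "pair g (axis b (1::int)) = g $ b"
  by (simp add: pair_def axis_def if_distrib sum.If_cases cong del: if_weak_cong)
lemma pair_zero[simp]: "pair g 0 = 0"
  by (simp add: pair_def)
lemma pair_sum: "finite S \<Longrightarrow> pair g (\<Sum>i\<in>S. f i) = (\<Sum>i\<in>S. pair g (f i))"
  by (induction S rule: finite_induct) (simp_all add: pair_add)

definition rho :: "int^'n \<Rightarrow> int^'n \<Rightarrow> int^'n \<Rightarrow> int^'n" where
  "rho g h v = v - pair g v *s h"

lemma rho_comb:
  assumes "pair g1 h1 = 2" "pair g1 h2 = - pp"
  shows "rho g1 h1 (v + X *s h1 + Y *s h2) = v + (- X - pair g1 v + pp * Y) *s h1 + Y *s h2"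
  using assms by (simp add: rho_def pair_add pair_smult vec_eq_iff algebra_simps)

lemma rho_comb2:
  assumes "pair g2 h2 = 2" "pair g2 h1 = - qq"
  shows "rho g2 h2 (v + X *s h1 + Y *s h2) = v + X *s h1 + (- Y - pair g2 v + qq * X) *s h2"
  using assms by (simp add: rho_def pair_add pair_smult vec_eq_iff algebra_simps)

definition mval :: "int \<Rightarrow> nat" where
  "mval n = (if n = 0 then 2 else if n = 1 then 3 else if n = 2 then 4 else 6)"

definition Fst :: "int \<Rightarrow> int \<Rightarrow> int \<Rightarrow> int \<Rightarrow> int \<times> int \<Rightarrow> int \<times> int" where
  "Fst pp qq a b XY = (let Y' = - snd XY - b + qq * fst XY in (- fst XY - a + pp * Y', Y'))"

lemma rho_iter:
  assumes "pair g1 h1 = 2" "pair g1 h2 = - pp" "pair g2 h2 = 2" "pair g2 h1 = - qq"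
  shows "((rho g1 h1 \<circ> rho g2 h2) ^^ n) (v + X *s h1 + Y *s h2) =
     v + fst ((Fst pp qq (pair g1 v) (pair g2 v) ^^ n) (X, Y)) *s h1
       + snd ((Fst pp qq (pair g1 v) (pair g2 v) ^^ n) (X, Y)) *s h2"
proof (induction n arbitrary: X Y)
  case 0 then show ?case by simp
next
  case (Suc n)
  have "((rho g1 h1 \<circ> rho g2 h2) ^^ Suc n) (v + X *s h1 + Y *s h2)
     = ((rho g1 h1 \<circ> rho g2 h2) ^^ n) ((rho g1 h1 \<circ> rho g2 h2) (v + X *s h1 + Y *s h2))"
    by (simp add: funpow_Suc_right del: funpow.simps)
  also have "(rho g1 h1 \<circ> rho g2 h2) (v + X *s h1 + Y *s h2) =
     v + fst (Fst pp qq (pair g1 v) (pair g2 v) (X,Y)) *s h1 + snd (Fst pp qq (pair g1 v) (pair g2 v) (X,Y)) *s h2"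
    using assms by (simp add: rho_comb rho_comb2 Fst_def Let_def)
  finally show ?case using Suc
    by (simp add: funpow_Suc_right del: funpow.simps)
qed

lemma braid_generic:
  assumes "pair g1 h1 = 2" "pair g1 h2 = - pp" "pair g2 h2 = 2" "pair g2 h1 = - qq"
    and pq: "(pp, qq) \<in> {(0,0),(1,1),(1,2),(2,1),(1,3),(3,1)}"
  shows "(rho g1 h1 \<circ> rho g2 h2) ^^ mval (pp * qq) = id"
proof
  fix v
  have e: "(Fst pp qq a b ^^ mval (pp * qq)) (0, 0) = (0,0)" for a b
    using pq by (auto simp: mval_def Fst_def Let_def numeral_eq_Suc algebra_simps)
  have "v = v + 0 *s h1 + 0 *s h2" by simp
  then show "((rho g1 h1 \<circ> rho g2 h2) ^^ mval (pp * qq)) v = id v"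
    using rho_iter[OF assms(1-4), of "mval (pp*qq)" v 0 0] e by simp
qed



fun alt :: "'a \<Rightarrow> 'a \<Rightarrow> nat \<Rightarrow> 'a list" where
  "alt a b 0 = []"
| "alt a b (Suc n) = a # alt b a n"

lemma length_alt[simp]: "length (alt a b n) = n"
  by (induction n arbitrary: a b) auto

lemma alt_add: "alt a b (k + l) = alt a b k @ (if even k then alt a b l else alt b a l)"
  by (induction k arbitrary: a b) auto

lemma alt_Suc_snoc: "alt a b (Suc k) = alt a b k @ [if even k then a else b]"
  using alt_add[of a b k 1] by simp

lemma set_alt: "set (alt a b n) \<subseteq> {a, b}"
  by (induction n arbitrary: a b) auto

lemma pq_cases:
  fixes p q :: int
  assumes "p \<ge> 0" "q \<ge> 0" "p = 0 \<longleftrightarrow> q = 0" "p * q < 4"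
  shows "(p, q) \<in> {(0,0),(1,1),(1,2),(2,1),(1,3),(3,1)}"
proof (cases "p = 0")
  case True then show ?thesis using assms by auto
next
  case False
  then have p1: "p \<ge> 1" "q \<ge> 1" using assms by auto
  have "p * 1 \<le> p * q" using p1 by (intro mult_left_mono) auto
  moreover have "1 * q \<le> p * q" using p1 by (intro mult_right_mono) auto
  ultimately have "p \<le> 3" "q \<le> 3" using assms by auto
  then have "p = 1 \<or> p = 2 \<or> p = 3" "q = 1 \<or> q = 2 \<or> q = 3" using p1 by auto
  then show ?thesis using assms(4) by (elim disjE; simp)
qed

locale km =
  fixes cor rt :: "'i::finite \<Rightarrow> int ^ 'd"
  assumes gcm: "gen_cartan_matrix (\<lambda>i j. pair (rt j) (cor i))"
begin

definition A :: "'i \<Rightarrow> 'i \<Rightarrow> int" where "A i j = pair (rt j) (cor i)"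
definition rowv :: "'i \<Rightarrow> int ^ 'i" where "rowv j = (\<chi> k. A j k)"
definition ev :: "'i \<Rightarrow> int ^ 'i" where "ev i = axis i 1"
definition sR :: "'i \<Rightarrow> int ^ 'i \<Rightarrow> int ^ 'i" where "sR j = rho (rowv j) (ev j)"
definition ract :: "'i list \<Rightarrow> int ^ 'i \<Rightarrow> int ^ 'i" where
  "ract ws b = foldl (\<lambda>b j. sR j b) b ws"
definition equ :: "'i list \<Rightarrow> 'i list \<Rightarrow> bool" where
  "equ ws vs \<longleftrightarrow> word_act cor rt ws = word_act cor rt vs \<and> ract ws = ract vs
      \<and> even (length ws) = even (length vs)"
definition red :: "'i list \<Rightarrow> bool" where
  "red ws \<longleftrightarrow> (\<forall>vs. equ vs ws \<longrightarrow> length ws \<le> length vs)"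

lemma A_diag: "A i i = 2"
  using gcm by (simp add: gen_cartan_matrix_def A_def)
lemma A_off: "i \<noteq> j \<Longrightarrow> A i j \<le> 0"
  using gcm by (simp add: gen_cartan_matrix_def A_def)
lemma A_zero: "A i j = 0 \<longleftrightarrow> A j i = 0"
  using gcm unfolding gen_cartan_matrix_def A_def by blast

lemma refl_rho: "refl cor rt i = rho (rt i) (cor i)"
  by (simp add: refl_def rho_def fun_eq_iff)

lemma rho_invol: "pair g h = 2 \<Longrightarrow> rho g h (rho g h v) = v"
  by (simp add: rho_def pair_diff pair_smult vec_eq_iff algebra_simps)

lemma pair_rowv_ev: "pair (rowv a) (ev b) = A a b"
  by (simp add: rowv_def ev_def pair_axis)
lemma pair_rt_cor: "pair (rt a) (cor b) = A b a"
  by (simp add: A_def)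

lemma refl_invol: "refl cor rt i (refl cor rt i v) = v"
  by (simp add: refl_rho rho_invol pair_rt_cor A_diag)
lemma sR_invol: "sR i (sR i v) = v"
  by (simp add: sR_def rho_invol pair_rowv_ev A_diag)

lemma word_act_Nil[simp]: "word_act cor rt [] = id"
  by (simp add: word_act_def)
lemma word_act_Cons[simp]: "word_act cor rt (i # ws) = refl cor rt i \<circ> word_act cor rt ws"
  by (simp add: word_act_def)
lemma word_act_append: "word_act cor rt (xs @ ys) = word_act cor rt xs \<circ> word_act cor rt ys"
  by (induction xs) auto
lemma ract_Nil[simp]: "ract [] = id"
  by (simp add: ract_def fun_eq_iff)
lemma ract_Cons[simp]: "ract (i # ws) b = ract ws (sR i b)"
  by (simp add: ract_def)
lemma ract_append: "ract (xs @ ys) b = ract ys (ract xs b)"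
  by (simp add: ract_def)
lemma ract_append': "ract (xs @ ys) = ract ys \<circ> ract xs"
  by (simp add: ract_append fun_eq_iff)

lemma equ_refl[simp]: "equ x x" by (simp add: equ_def)
lemma equ_sym: "equ x y \<Longrightarrow> equ y x" by (auto simp: equ_def)
lemma equ_trans: "equ x y \<Longrightarrow> equ y z \<Longrightarrow> equ x z" by (auto simp: equ_def)
lemma equ_cong: "equ a b \<Longrightarrow> equ (xs @ a @ ys) (xs @ b @ ys)"
  by (auto simp: equ_def word_act_append ract_append')
lemma equ_congL: "equ a b \<Longrightarrow> equ (a @ ys) (b @ ys)"
  using equ_cong[of a b "[]" ys] by simp
lemma equ_congR: "equ a b \<Longrightarrow> equ (xs @ a) (xs @ b)"
  using equ_cong[of a b xs "[]"] by simp
lemma equ_dbl: "equ [x, x] []"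
  by (auto simp: equ_def fun_eq_iff refl_invol sR_invol)
lemma equ_dbl_mid: "equ (xs @ x # x # ys) (xs @ ys)"
  using equ_cong[OF equ_dbl, of xs x ys] by simp
lemma equ_rev_cancel: "equ (r @ rev r) []"
proof (induction r)
  case Nil then show ?case by simp
next
  case (Cons c r)
  have "equ ([c] @ (r @ rev r) @ [c]) ([c] @ [] @ [c])" by (rule equ_cong[OF Cons])
  then have "equ (c # r @ rev r @ [c]) [c, c]" by simp
  then have "equ (c # r @ rev r @ [c]) []" using equ_trans[OF _ equ_dbl] by blast
  then show ?case by simp
qed
lemma equ_solve: "equ (x @ r) [] \<Longrightarrow> equ x (rev r)"
proof -
  assume h: "equ (x @ r) []"
  have "equ (x @ (r @ rev r)) (x @ [])" by (rule equ_congR[OF equ_rev_cancel])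
  moreover have "equ ((x @ r) @ rev r) ([] @ rev r)" by (rule equ_congL[OF h])
  ultimately have "equ (x @ r @ rev r) x" "equ (x @ r @ rev r) (rev r)" by simp_all
  then show ?thesis using equ_trans[OF equ_sym] by blast
qed

lemma red_le: "red ws \<Longrightarrow> equ vs ws \<Longrightarrow> length ws \<le> length vs"
  by (simp add: red_def)
lemma red_equ_len: "red w \<Longrightarrow> equ x w \<Longrightarrow> length x = length w \<Longrightarrow> red x"
  unfolding red_def using equ_trans by fastforce
lemma red_appendL: "red (xs @ ys) \<Longrightarrow> red xs"
  unfolding red_def
proof (intro allI impI)
  fix vs assume h: "\<forall>vs. equ vs (xs @ ys) \<longrightarrow> length (xs @ ys) \<le> length vs" "equ vs xs"
  have "equ (vs @ ys) (xs @ ys)" by (rule equ_congL[OF h(2)])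
  with h(1) show "length xs \<le> length vs" by fastforce
qed
lemma red_appendR: "red (xs @ ys) \<Longrightarrow> red ys"
  unfolding red_def
proof (intro allI impI)
  fix vs assume h: "\<forall>vs. equ vs (xs @ ys) \<longrightarrow> length (xs @ ys) \<le> length vs" "equ vs ys"
  have "equ (xs @ vs) (xs @ ys)" by (rule equ_congR[OF h(2)])
  with h(1) show "length ys \<le> length vs" by fastforce
qed
lemma red_ConsD: "red (x # ys) \<Longrightarrow> red ys"
  using red_appendR[of "[x]" ys] by simp
lemma not_red_dbl: "\<not> red (xs @ x # x # ys)"
proof
  assume "red (xs @ x # x # ys)"
  from red_le[OF this equ_sym[OF equ_dbl_mid]] show False by simp
qed

lemma exists_red: "\<exists>w. equ w ws \<and> red w"
proof -
  define n where "n = (LEAST n. \<exists>w. equ w ws \<and> length w = n)"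
  have ex: "\<exists>n w. equ w ws \<and> length w = n" using equ_refl by blast
  obtain w where w: "equ w ws" "length w = n"
    using LeastI_ex[OF ex] unfolding n_def by blast
  have "red w"
    unfolding red_def
  proof (intro allI impI)
    fix vs assume "equ vs w"
    then have "equ vs ws" using w equ_trans by blast
    then show "length w \<le> length vs" unfolding w(2) n_def by (auto intro: Least_le)
  qed
  then show ?thesis using w by blast
qed

end


fun C :: "int \<Rightarrow> int \<Rightarrow> nat \<Rightarrow> int \<times> int" where
  "C p q 0 = (1, 0)"
| "C p q (Suc k) = (if even k then (fst (C p q k), q * fst (C p q k) - snd (C p q k))
                    else (p * snd (C p q k) - fst (C p q k), snd (C p q k)))"

lemma C_inf:
  assumes p: "p \<ge> 0" and q: "q \<ge> 0" and pq: "p * q \<ge> 4"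
  shows "fst (C p q k) \<ge> 0 \<and> snd (C p q k) \<ge> 0 \<and>
    (if even k then p * snd (C p q k) \<le> 2 * fst (C p q k) else q * fst (C p q k) \<le> 2 * snd (C p q k))"
proof (induction k)
  case 0 then show ?case by simp
next
  case (Suc k)
  define x where "x = fst (C p q k)"
  define y where "y = snd (C p q k)"
  have x0: "x \<ge> 0" and y0: "y \<ge> 0" using Suc unfolding x_def y_def by auto
  show ?case
  proof (cases "even k")
    case True
    then have h: "p * y \<le> 2 * x" using Suc unfolding x_def y_def by auto
    have "4 * y \<le> (p * q) * y" using pq y0 by (intro mult_right_mono) auto
    also have "\<dots> = q * (p * y)" by (simp add: algebra_simps)
    also have "\<dots> \<le> q * (2 * x)" using h q by (intro mult_left_mono) auto
    finally have "2 * y \<le> q * x" by simp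
    then show ?thesis using True x0 y0 unfolding x_def y_def by simp
  next
    case False
    then have h: "q * x \<le> 2 * y" using Suc unfolding x_def y_def by auto
    have "4 * x \<le> (p * q) * x" using pq x0 by (intro mult_right_mono) auto
    also have "\<dots> = p * (q * x)" by (simp add: algebra_simps)
    also have "\<dots> \<le> p * (2 * y)" using h p by (intro mult_left_mono) auto
    finally have "2 * x \<le> p * y" by simp
    then show ?thesis using False x0 y0 unfolding x_def y_def by simp
  qed
qed

lemma C_fin:
  assumes "(p, q) \<in> {(0,0),(1,1),(1,2),(2,1),(1,3),(3,1)}" "k < mval (p * q)"
  shows "fst (C p q k) \<ge> 0 \<and> snd (C p q k) \<ge> 0"
proof -
  have "k < 6" using assms(2) by (simp add: mval_def split: if_splits)
  then have "k = 0 \<or> k = 1 \<or> k = 2 \<or> k = 3 \<or> k = 4 \<or> k = 5" by auto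
  then show ?thesis using assms
    by (elim disjE; simp add: mval_def numeral_eq_Suc; elim disjE; simp)
qed

context km
begin

lemma word_act_alt2: "word_act cor rt (alt a b (2 * n)) = (refl cor rt a \<circ> refl cor rt b) ^^ n"
  by (induction n) (auto simp: fun_eq_iff)

lemma ract_alt2: "ract (alt a b (2 * n)) = (sR b \<circ> sR a) ^^ n"
proof (induction n)
  case 0 then show ?case by simp
next
  case (Suc n)
  have "alt a b (2 * Suc n) = [a, b] @ alt a b (2 * n)" by simp
  then have "ract (alt a b (2 * Suc n)) = ract (alt a b (2 * n)) \<circ> ract [a,b]"
    by (simp only: ract_append')
  also have "ract [a,b] = sR b \<circ> sR a" by (simp add: fun_eq_iff)
  finally show ?case using Suc by (simp add: funpow_Suc_right del: funpow.simps)
qed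

lemma pq_ok:
  assumes "a \<noteq> b" "- A a b * - A b a < 4"
  shows "(- A b a, - A a b) \<in> {(0,0),(1,1),(1,2),(2,1),(1,3),(3,1)}"
  using pq_cases[of "- A b a" "- A a b"] assms A_off[of a b] A_off[of b a] A_zero[of a b]
  by (simp add: mult.commute)

lemma braid:
  assumes ab: "a \<noteq> b" and pq: "- A a b * - A b a < 4"
  shows "equ (alt a b (2 * mval (- A a b * - A b a))) []"
proof -
  define p where "p = - A a b"
  define q where "q = - A b a"
  have L: "(q, p) \<in> {(0,0),(1,1),(1,2),(2,1),(1,3),(3,1)}"
    using pq_ok[OF ab pq] unfolding p_def q_def .
  have m: "mval (- A a b * - A b a) = mval (q * p)" unfolding p_def q_def by (simp add: mult.commute)
  have Y: "(rho (rt a) (cor a) \<circ> rho (rt b) (cor b)) ^^ mval (q * p) = id"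
    by (rule braid_generic[OF _ _ _ _ L]) (simp_all add: pair_rt_cor A_diag p_def q_def)
  have R: "(sR b \<circ> sR a) ^^ mval (q * p) = id"
    unfolding sR_def
    by (rule braid_generic[OF _ _ _ _ L]) (simp_all add: pair_rowv_ev A_diag p_def q_def)
  show ?thesis
    unfolding equ_def m word_act_alt2 ract_alt2 using Y R by (simp add: refl_rho fun_eq_iff)
qed

lemma mval_ge2: "mval n \<ge> 2" by (simp add: mval_def)

lemma not_red_long:
  assumes ab: "a \<noteq> b" and pq: "- A a b * - A b a < 4"
    and n: "n \<ge> mval (- A a b * - A b a) + 1"
  shows "\<not> red (alt a b n)"
proof
  assume rd: "red (alt a b n)"
  define m where "m = mval (- A a b * - A b a)"
  have m2: "m \<ge> 2" unfolding m_def by (rule mval_ge2)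
  define R where "R = (if even (m + 1) then alt a b (m - 1) else alt b a (m - 1))"
  have "alt a b (2 * m) = alt a b ((m + 1) + (m - 1))" using m2 by (simp add: mult_2)
  also have "\<dots> = alt a b (m + 1) @ R" unfolding R_def by (rule alt_add)
  finally have "equ (alt a b (m + 1) @ R) []" using braid[OF ab pq] unfolding m_def by simp
  then have e1: "equ (alt a b (m + 1)) (rev R)" by (rule equ_solve)
  define T where "T = (if even (m + 1) then alt a b (n - (m + 1)) else alt b a (n - (m + 1)))"
  have "alt a b n = alt a b ((m + 1) + (n - (m + 1)))" using n unfolding m_def by simp
  also have "\<dots> = alt a b (m + 1) @ T" unfolding T_def by (rule alt_add)
  finally have "equ (rev R @ T) (alt a b n)" using equ_congL[OF e1, of T] equ_sym by simp
  from red_le[OF rd this] have "n \<le> length R + length T" by simp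
  moreover have "length R = m - 1" "length T = n - (m + 1)" unfolding R_def T_def by simp_all
  ultimately show False using n m2 unfolding m_def by simp
qed

lemma alt_struct:
  assumes "set xs \<subseteq> {c, d}" "c \<noteq> d" "red (c # xs)"
  shows "xs = alt d c (length xs)"
  using assms
proof (induction xs arbitrary: c d)
  case Nil then show ?case by simp
next
  case (Cons x xs)
  have "x \<noteq> c" using Cons.prems(3) not_red_dbl[of "[]" c xs] by auto
  then have xd: "x = d" using Cons.prems(1) by auto
  have "red (d # xs)" using Cons.prems(3) xd by (auto dest: red_ConsD)
  then have "xs = alt c d (length xs)"
    using Cons.IH[of d c] Cons.prems xd by auto
  then show ?case using xd by simp
qed

lemma sR_2d:
  assumes "i \<noteq> j"
  shows "sR j (x *s ev i + y *s ev j) = x *s ev i + (- y - A j i * x) *s ev j"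
    and "sR i (x *s ev i + y *s ev j) = (- x - A i j * y) *s ev i + y *s ev j"
  by (simp_all add: sR_def rho_def pair_add pair_smult pair_rowv_ev A_diag vec_eq_iff algebra_simps)

lemma ract_alt_C:
  assumes "i \<noteq> j"
  shows "ract (alt j i k) (ev i) = fst (C (- A i j) (- A j i) k) *s ev i + snd (C (- A i j) (- A j i) k) *s ev j"
proof (induction k)
  case 0
  then show ?case by (simp add: vec_eq_iff ev_def)
next
  case (Suc k)
  show ?case
  proof (cases "even k")
    case True
    then show ?thesis unfolding alt_Suc_snoc ract_append Suc
      by (simp add: sR_2d[OF assms]) (simp add: vec_eq_iff algebra_simps)
  next
    case False
    then show ?thesis unfolding alt_Suc_snoc ract_append Suc
      by (simp add: sR_2d[OF assms]) (simp add: vec_eq_iff algebra_simps)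
  qed
qed

lemma dihedral:
  assumes ij: "i \<noteq> j" and s: "set vJ \<subseteq> {i, j}" and r1: "red vJ" and r2: "red (i # vJ)"
  shows "\<exists>x y. x \<ge> 0 \<and> y \<ge> 0 \<and> ract vJ (ev i) = x *s ev i + y *s ev j"
proof -
  define k where "k = length vJ"
  have vJ: "vJ = alt j i k" using alt_struct[OF s ij r2] unfolding k_def .
  define p where "p = - A i j"
  define q where "q = - A j i"
  have p0: "p \<ge> 0" and q0: "q \<ge> 0" using A_off ij unfolding p_def q_def by auto
  have nn: "fst (C p q k) \<ge> 0 \<and> snd (C p q k) \<ge> 0"
  proof (cases "p * q \<ge> 4")
    case True then show ?thesis using C_inf[OF p0 q0 True, of k] by simp
  next
    case False
    then have lt: "p * q < 4" by simp
    have "red (alt i j (Suc k))" using r2 vJ by simp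
    then have "\<not> (Suc k \<ge> mval (p * q) + 1)"
      using not_red_long[OF ij] lt unfolding p_def q_def by blast
    then have "k < mval (p * q)" by simp
    moreover have "(p, q) \<in> {(0,0),(1,1),(1,2),(2,1),(1,3),(3,1)}"
      using pq_ok[of j i] ij lt unfolding p_def q_def by (simp add: mult.commute)
    ultimately show ?thesis using C_fin by blast
  qed
  show ?thesis using nn ract_alt_C[OF ij, of k] vJ unfolding p_def q_def by blast
qed

end


context km
begin

lemma sR_lin: "sR j (x *s a + y *s b) = x *s sR j a + y *s sR j b"
  by (simp add: sR_def rho_def pair_add pair_smult vec_eq_iff algebra_simps)

lemma ract_lin: "ract ws (x *s a + y *s b) = x *s ract ws a + y *s ract ws b"
  by (induction ws arbitrary: a b) (simp_all add: sR_lin)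

lemma root_pos: "red w \<Longrightarrow> red (i # w) \<Longrightarrow> \<forall>k. ract w (ev i) $ k \<ge> 0"
proof (induction "length w" arbitrary: w i rule: less_induct)
  case less
  show ?case
  proof (cases w)
    case Nil
    then show ?thesis by (simp add: ev_def axis_def)
  next
    case (Cons j w')
    have ij: "i \<noteq> j"
    proof
      assume "i = j"
      then show False using less.prems(2) not_red_dbl[of "[]" i w'] Cons by simp
    qed
    define D where "D = {v. \<exists>vJ. set vJ \<subseteq> {i, j} \<and> equ (vJ @ v) w \<and> length vJ + length v = length w}"
    have w'D: "w' \<in> D" unfolding D_def using Cons by (intro CollectI exI[of _ "[j]"]) auto
    define n0 where "n0 = (LEAST n. \<exists>v\<in>D. length v = n)"
    have ex: "\<exists>n. \<exists>v\<in>D. length v = n" using w'D by blast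
    obtain v where vD: "v \<in> D" and vlen: "length v = n0"
      using LeastI_ex[OF ex] unfolding n0_def by blast
    have vmin: "length v \<le> length u" if "u \<in> D" for u
      using that unfolding vlen n0_def by (auto intro: Least_le)
    obtain vJ where vJ: "set vJ \<subseteq> {i, j}" "equ (vJ @ v) w" "length vJ + length v = length w"
      using vD unfolding D_def by blast
    have vlt: "length v < length w"
      using vmin[OF w'D] Cons by simp
    have rJv: "red (vJ @ v)" using red_equ_len[OF less.prems(1) vJ(2)] vJ(3) by simp
    then have rv: "red v" and rvJ: "red vJ" using red_appendL red_appendR by blast+
    have rcv: "red (c # v)" if c: "c \<in> {i, j}" for c
    proof (rule ccontr)
      assume "\<not> red (c # v)"
      then obtain u where u: "equ u (c # v)" "length u < Suc (length v)"
        unfolding red_def by (auto simp: not_le)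
      have par: "even (length u) = even (Suc (length v))" using u(1) by (simp add: equ_def)
      then have ulen: "length u < length v" using u(2) by (cases "length u = length v") auto
      have "equ ((vJ @ [c]) @ u) ((vJ @ [c]) @ (c # v))" by (rule equ_congR[OF u(1)])
      moreover have "equ ((vJ @ [c]) @ (c # v)) (vJ @ v)"
        using equ_dbl_mid[of vJ c v] by simp
      ultimately have e: "equ ((vJ @ [c]) @ u) w" using vJ(2) equ_trans by blast
      have "length w \<le> length ((vJ @ [c]) @ u)" by (rule red_le[OF less.prems(1) e])
      then have "length (vJ @ [c]) + length u = length w" using ulen vJ(3) by simp
      then have "u \<in> D" unfolding D_def using vJ(1) c e by (intro CollectI exI[of _ "vJ @ [c]"]) auto
      from vmin[OF this] ulen show False by simp
    qed
    have pi: "\<forall>k. ract v (ev i) $ k \<ge> 0" using less.hyps[OF vlt rv rcv] by simp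
    have pj: "\<forall>k. ract v (ev j) $ k \<ge> 0" using less.hyps[OF vlt rv rcv] by simp
    have "equ ((i # vJ) @ v) (i # w)" using equ_congR[OF vJ(2), of "[i]"] by simp
    then have "red ((i # vJ) @ v)" using red_equ_len[OF less.prems(2)] vJ(3) by simp
    then have riJ: "red (i # vJ)" by (rule red_appendL)
    obtain x y where xy: "x \<ge> 0" "y \<ge> 0" "ract vJ (ev i) = x *s ev i + y *s ev j"
      using dihedral[OF ij vJ(1) rvJ riJ] by blast
    have "ract w = ract (vJ @ v)" using vJ(2) by (simp add: equ_def)
    then have "ract w (ev i) = x *s ract v (ev i) + y *s ract v (ev j)"
      by (simp add: ract_append xy(3) ract_lin)
    then show ?thesis using pi pj xy by simp
  qed
qed

definition alph :: "int ^ 'i \<Rightarrow> int ^ 'd \<Rightarrow> int" where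
  "alph b v = (\<Sum>k\<in>UNIV. b $ k * pair (rt k) v)"

lemma alph_ev: "alph (ev j) u = pair (rt j) u"
proof -
  have "(\<Sum>k\<in>UNIV. axis j 1 $ k * pair (rt k) u) = (\<Sum>k\<in>UNIV. if k = j then pair (rt k) u else 0)"
    by (intro sum.cong) (auto simp: axis_def)
  then show ?thesis by (simp add: alph_def ev_def)
qed

lemma alph_refl: "alph b (refl cor rt j u) = alph (sR j b) u"
proof -
  have c: "alph b (cor j) = pair (rowv j) b"
    by (simp add: alph_def pair_def rowv_def A_def mult.commute)
  have "alph b (refl cor rt j u) = alph b u - pair (rt j) u * alph b (cor j)"
    by (simp add: alph_def refl_def pair_diff pair_smult sum_subtractf sum_distrib_left algebra_simps)
  also have "\<dots> = alph b u - pair (rowv j) b * alph (ev j) u"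
    by (simp add: c alph_ev)
  also have "\<dots> = alph (sR j b) u"
    by (simp add: alph_def sR_def rho_def sum_subtractf sum_distrib_left algebra_simps)
  finally show ?thesis .
qed

lemma transfer: "alph b (word_act cor rt ws v) = alph (ract ws b) v"
  by (induction ws arbitrary: b) (simp_all add: alph_refl)

lemma sum_delta_cor: "(\<Sum>i\<in>UNIV. ((c :: 'i \<Rightarrow> int) i + (if i = j then t else 0)) *s (f i :: int ^ 'd))
    = (\<Sum>i\<in>UNIV. c i *s f i) + t *s f j"
proof -
  have "(\<Sum>i\<in>UNIV. (c i + (if i = j then t else 0)) *s f i)
     = (\<Sum>i\<in>UNIV. c i *s f i + (if i = j then t *s f i else 0))"
    by (intro sum.cong) (auto simp: vector_sadd_rdistrib)
  moreover have "(\<Sum>i\<in>UNIV. if i = j then t *s f i else 0) = t *s f j"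
    by (subst sum.delta) auto
  ultimately show ?thesis by (simp add: sum.distrib)
qed

lemma Y_pos:
  assumes dom: "dominant rt lam"
  shows "red ws \<Longrightarrow> \<exists>c. (\<forall>i. c i \<ge> 0) \<and> lam - word_act cor rt ws lam = (\<Sum>i\<in>UNIV. c i *s cor i)"
proof (induction ws)
  case Nil
  show ?case by (intro exI[of _ "\<lambda>_. 0"]) simp
next
  case (Cons j ws)
  have rws: "red ws" using Cons.prems by (rule red_ConsD)
  obtain c where c: "\<forall>i. c i \<ge> 0" "lam - word_act cor rt ws lam = (\<Sum>i\<in>UNIV. c i *s cor i)"
    using Cons.IH[OF rws] by blast
  define u where "u = word_act cor rt ws lam"
  define t where "t = pair (rt j) u"
  have "t = alph (ract ws (ev j)) lam" unfolding t_def u_def by (simp add: transfer[symmetric] alph_ev)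
  moreover have "\<forall>k. ract ws (ev j) $ k \<ge> 0" by (rule root_pos[OF rws Cons.prems])
  ultimately have t0: "t \<ge> 0"
    using dom unfolding alph_def dominant_def by (auto intro: sum_nonneg)
  have "lam - word_act cor rt (j # ws) lam = (lam - u) + t *s cor j"
    by (simp add: u_def t_def refl_def)
  also have "\<dots> = (\<Sum>i\<in>UNIV. (c i + (if i = j then t else 0)) *s cor i)"
    by (simp add: sum_delta_cor c(2)[folded u_def])
  finally show ?case using c(1) t0 by (intro exI[of _ "\<lambda>i. c i + (if i = j then t else 0)"]) auto
qed

end


lemma height_eq:
  fixes cor :: "'i::finite \<Rightarrow> int ^ 'd"
  assumes free: "free_family cor"
  shows "height cor (\<Sum>i\<in>UNIV. c i *s cor i) = (\<Sum>i\<in>UNIV. c i)"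
  unfolding height_def
proof (rule the_equality)
  show "\<exists>c'. (\<Sum>i\<in>UNIV. c i *s cor i) = (\<Sum>i\<in>UNIV. c' i *s cor i) \<and> (\<Sum>i\<in>UNIV. c i) = (\<Sum>i\<in>UNIV. c' i)"
    by blast
next
  fix s assume "\<exists>c'. (\<Sum>i\<in>UNIV. c i *s cor i) = (\<Sum>i\<in>UNIV. c' i *s cor i) \<and> s = (\<Sum>i\<in>UNIV. c' i)"
  then obtain c' where c': "(\<Sum>i\<in>UNIV. c i *s cor i) = (\<Sum>i\<in>UNIV. c' i *s cor i)" "s = (\<Sum>i\<in>UNIV. c' i)"
    by blast
  have "(\<Sum>i\<in>UNIV. (c i - c' i) *s cor i) = (\<Sum>i\<in>UNIV. c i *s cor i) - (\<Sum>i\<in>UNIV. c' i *s cor i)"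
    by (simp add: vector_sub_rdistrib sum_subtractf)
  then have "(\<Sum>i\<in>UNIV. (c i - c' i) *s cor i) = 0" using c'(1) by simp
  then have "\<forall>i. c i - c' i = 0" using free[unfolded free_family_def, rule_format, of "\<lambda>i. c i - c' i"] by simp
  then show "s = (\<Sum>i\<in>UNIV. c i)" using c'(2) by simp
qed

context km
begin

lemma orbit_coef:
  assumes free: "free_family cor" and dom: "dominant rt lam"
  shows "\<exists>d. word_act cor rt ws lam - lam = (\<Sum>i\<in>UNIV. d i *s cor i) \<and> (\<forall>i. d i \<le> 0)"
proof -
  obtain w where w: "equ w ws" "red w" using exists_red by blast
  obtain c where c: "\<forall>i. c i \<ge> 0" "lam - word_act cor rt w lam = (\<Sum>i\<in>UNIV. c i *s cor i)"
    using Y_pos[OF dom w(2)] by blast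
  have "word_act cor rt ws lam - lam = - (\<Sum>i\<in>UNIV. c i *s cor i)"
    using c(2) w(1) by (simp add: equ_def algebra_simps)
  also have "\<dots> = (\<Sum>i\<in>UNIV. (- c i) *s cor i)"
    by (simp add: sum_negf vector_smult_lneg)
  finally show ?thesis using c(1) by (intro exI[of _ "\<lambda>i. - c i"]) auto
qed

lemma orbit_height:
  assumes free: "free_family cor" and dom: "dominant rt lam"
  shows "in_Qcor cor (word_act cor rt ws lam - lam) \<and> height cor (word_act cor rt ws lam - lam) \<le> 0"
proof -
  obtain d where d: "word_act cor rt ws lam - lam = (\<Sum>i\<in>UNIV. d i *s cor i)" "\<forall>i. d i \<le> 0"
    using orbit_coef[OF free dom] by blast
  have "height cor (word_act cor rt ws lam - lam) = (\<Sum>i\<in>UNIV. d i)"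
    using d(1) height_eq[OF free] by simp
  also have "\<dots> \<le> 0" using d(2) by (simp add: sum_nonpos)
  finally show ?thesis using d(1) unfolding in_Qcor_def by blast
qed

lemma height_step:
  assumes free: "free_family cor" and q: "in_Qcor cor x"
  shows "height cor (x - t *s cor j) = height cor x - t"
proof -
  obtain c where c: "x = (\<Sum>i\<in>UNIV. c i *s cor i)" using q unfolding in_Qcor_def by blast
  have "x - t *s cor j = (\<Sum>i\<in>UNIV. (c i + (if i = j then - t else 0)) *s cor i)"
    by (simp add: sum_delta_cor c vector_smult_lneg)
  then have "height cor (x - t *s cor j) = (\<Sum>i\<in>UNIV. (c i + (if i = j then - t else 0)))"
    using height_eq[OF free] by simp
  also have "\<dots> = (\<Sum>i\<in>UNIV. c i) - t"
    by (simp add: sum.distrib sum.delta)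
  finally show ?thesis using height_eq[OF free] c by simp
qed

lemma descent:
  assumes free: "free_family cor" and dom: "dominant rt lam"
  shows "nat (- height cor (word_act cor rt ws lam - lam)) \<le> N \<Longrightarrow>
    \<exists>us v. dominant rt v \<and> word_act cor rt us v = word_act cor rt ws lam \<and> length us \<le> N"
proof (induction N arbitrary: ws)
  case 0
  let ?\<nu> = "word_act cor rt ws lam"
  show ?case
  proof (cases "dominant rt ?\<nu>")
    case True then show ?thesis by (intro exI[of _ "[]"] exI[of _ ?\<nu>]) simp
  next
    case False
    then obtain i where i: "pair (rt i) ?\<nu> < 0" unfolding dominant_def by (auto simp: not_le)
    have eq: "word_act cor rt (i # ws) lam - lam = (?\<nu> - lam) - pair (rt i) ?\<nu> *s cor i"
      by (simp add: refl_def algebra_simps)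
    have "height cor (word_act cor rt (i # ws) lam - lam) = height cor ((?\<nu> - lam) - pair (rt i) ?\<nu> *s cor i)"
      by (simp only: eq)
    also have "\<dots> = height cor (?\<nu> - lam) - pair (rt i) ?\<nu>"
      by (rule height_step[OF free conjunct1[OF orbit_height[OF free dom]]])
    finally have "height cor (word_act cor rt (i # ws) lam - lam) = height cor (?\<nu> - lam) - pair (rt i) ?\<nu>" .
    then show ?thesis using orbit_height[OF free dom, of "i # ws"] i 0 by simp
  qed
next
  case (Suc N)
  let ?\<nu> = "word_act cor rt ws lam"
  show ?case
  proof (cases "dominant rt ?\<nu>")
    case True then show ?thesis by (intro exI[of _ "[]"] exI[of _ ?\<nu>]) simp
  next
    case False
    then obtain i where i: "pair (rt i) ?\<nu> < 0" unfolding dominant_def by (auto simp: not_le)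
    have eq: "word_act cor rt (i # ws) lam - lam = (?\<nu> - lam) - pair (rt i) ?\<nu> *s cor i"
      by (simp add: refl_def algebra_simps)
    have "height cor (word_act cor rt (i # ws) lam - lam) = height cor ((?\<nu> - lam) - pair (rt i) ?\<nu> *s cor i)"
      by (simp only: eq)
    also have "\<dots> = height cor (?\<nu> - lam) - pair (rt i) ?\<nu>"
      by (rule height_step[OF free conjunct1[OF orbit_height[OF free dom]]])
    finally have "height cor (word_act cor rt (i # ws) lam - lam) = height cor (?\<nu> - lam) - pair (rt i) ?\<nu>" .
    then have "nat (- height cor (word_act cor rt (i # ws) lam - lam)) \<le> N"
      using orbit_height[OF free dom, of "i # ws"] i Suc.prems by simp
    then obtain us v where uv: "dominant rt v" "word_act cor rt us v = word_act cor rt (i # ws) lam"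
       "length us \<le> N" using Suc.IH by blast
    have "word_act cor rt (i # us) v = ?\<nu>" using uv(2) by (simp add: refl_invol)
    then show ?thesis using uv by (intro exI[of _ "i # us"] exI[of _ v]) simp
  qed
qed

lemma len_bound:
  assumes free: "free_family cor" and dom: "dominant rt lam"
  shows "len_wmu cor rt (word_act cor rt ws lam) \<le> nat (- height cor (word_act cor rt ws lam - lam))"
proof -
  obtain us v where uv: "dominant rt v" "word_act cor rt us v = word_act cor rt ws lam"
    "length us \<le> nat (- height cor (word_act cor rt ws lam - lam))"
    using descent[OF free dom order.refl] by blast
  have W: "word_act cor rt us \<in> weyl cor rt" unfolding weyl_def by blast
  have "wlen cor rt (word_act cor rt us) \<le> length us"
    unfolding wlen_def by (rule Least_le) blast
  moreover have "len_wmu cor rt (word_act cor rt ws lam) \<le> wlen cor rt (word_act cor rt us)"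
    unfolding len_wmu_def by (rule Least_le) (use W uv in blast)
  ultimately show ?thesis using uv(3) by simp
qed

end

theorem mainTheorem9:
  fixes cor rt :: "'i::finite \<Rightarrow> int ^ 'd"
    and lam :: "int ^ 'd" and \<mu> :: "nat \<Rightarrow> int ^ 'd"
  assumes gcm: "gen_cartan_matrix (\<lambda>i j. pair (rt j) (cor i))"
    and free: "free_family cor"
    and dom: "dominant rt lam"
    and orbit: "\<forall>n. \<mu> n \<in> (\<lambda>w. w lam) ` weyl cor rt"
    and lenlim: "filterlim (\<lambda>n. len_wmu cor rt (\<mu> n)) at_top sequentially"
  shows "(\<forall>n. in_Qcor cor (\<mu> n - lam)) \<and>
         filterlim (\<lambda>n. height cor (\<mu> n - lam)) at_bot sequentially"
proof -
  interpret km cor rt by (rule km.intro[OF gcm])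
  have ws: "\<forall>n. \<exists>ws. \<mu> n = word_act cor rt ws lam" using orbit unfolding weyl_def by blast
  have Q: "in_Qcor cor (\<mu> n - lam)" and H: "height cor (\<mu> n - lam) \<le> 0"
    and L: "len_wmu cor rt (\<mu> n) \<le> nat (- height cor (\<mu> n - lam))" for n
    using ws orbit_height[OF free dom] len_bound[OF free dom] by metis+
  have "filterlim (\<lambda>n. height cor (\<mu> n - lam)) at_bot sequentially"
    unfolding filterlim_at_bot
  proof
    fix Z :: int
    have "eventually (\<lambda>n. nat (- Z) \<le> len_wmu cor rt (\<mu> n)) sequentially"
      using lenlim unfolding filterlim_at_top by blast
    then show "eventually (\<lambda>n. height cor (\<mu> n - lam) \<le> Z) sequentially"
    proof (rule eventually_mono)
      fix n assume "nat (- Z) \<le> len_wmu cor rt (\<mu> n)"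
      then have "nat (- Z) \<le> nat (- height cor (\<mu> n - lam))" using L[of n] by simp
      then show "height cor (\<mu> n - lam) \<le> Z" using H[of n] by simp
    qed
  qed
  then show ?thesis using Q by blast
qed


end
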